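(* There is an absolute constant $C>0$ such that for every $n\in\mathbb N$ and any positive numbers $\alpha_1,\dots,\alpha_n$ there exist points $z_1,\dots,z_n\in\mathbb T$ with $$\int_{\mathbb D}\left|\sum_{k=1}^n\frac{\alpha_k}{z-z_k}\right|dm(z)\ \le\ C\,\frac{\sum_{k=1}^n\alpha_k^2}{\sum_{k=1}^n\alpha_k}.$$
   Context: $\mathbb D$ is the open unit disc in $\mathbb C$, $\mathbb T$ the unit circle, and $m$ planar Lebesgue measure. *)

theory Defs
  imports "HOL-Analysis.Analysis"
begin

end

theory Submission
  imports Defs
begin


lemma cball_measure_le:
  fixes c :: complex assumes "r \<ge> 0"
  shows "emeasure lborel (cball c r) \<le> ennreal (4 * r^2)"
proof -
  have sub: "cball c r \<subseteq> cbox (c - Complex r r) (c + Complex r r)"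
  proof
    fix z assume "z \<in> cball c r"
    then have "norm (z - c) \<le> r" by (simp add: dist_norm norm_minus_commute)
    then have "\<bar>Re (z - c)\<bar> \<le> r" "\<bar>Im (z - c)\<bar> \<le> r"
      using abs_Re_le_cmod abs_Im_le_cmod order_trans by blast+
    then show "z \<in> cbox (c - Complex r r) (c + Complex r r)"
      by (auto simp: cbox_def Basis_complex_def)
  qed
  have "emeasure lborel (cball c r) \<le> emeasure lborel (cbox (c - Complex r r) (c + Complex r r))"
    by (rule emeasure_mono[OF sub]) simp
  also have "\<dots> = ennreal (4 * r^2)"
    using assms by (simp add: emeasure_lborel_cbox_eq Basis_complex_def power2_eq_square)
  finally show ?thesis .
qed

lemma dyadic_exists:
  fixes x :: real assumes "x \<ge> 1"
  shows "\<exists>j::nat. 2^j \<le> x \<and> x < 2^(Suc j)"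
proof -
  obtain n :: nat where n: "x < 2^n" using real_arch_pow[of 2 x] by auto
  define N where "N = (LEAST n::nat. x < 2^n)"
  have N: "x < 2^N" unfolding N_def by (rule LeastI[of _ n]) (rule n)
  have "N \<noteq> 0" using N assms by (cases N) auto
  then obtain j where j: "N = Suc j" by (cases N) auto
  have "\<not> x < 2^j" using not_less_Least[of j "\<lambda>n. x < 2^n"] j N_def by auto
  then show ?thesis using N j by (intro exI[of _ j]) auto
qed

lemma suminf_ge_term: "(f i :: ennreal) \<le> (\<Sum>j. f j)"
  using sum_le_suminf[of f "{i}"] by (simp add: summableI)

lemma geom_sum_ennreal:
  fixes a :: real assumes "a \<ge> 0"
  shows "(\<Sum>j. ennreal (a / 2^j)) = ennreal (2 * a)"
proof -
  have "(\<lambda>j. a * (1/2)^j) sums (a * (1 / (1 - 1/2)))"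
    by (intro sums_mult geometric_sums) auto
  then have s: "(\<lambda>j. a / 2^j) sums (2 * a)" by (simp add: power_one_over mult.commute)
  have "(\<Sum>j. ennreal (a / 2^j)) = ennreal (\<Sum>j. a / 2^j)"
    using s assms by (intro suminf_ennreal2) (auto simp: sums_summable)
  also have "\<dots> = ennreal (2*a)" using s sums_unique by metis
  finally show ?thesis .
qed

lemma cball_sets_borel[measurable]: "cball (c::'a::euclidean_space) r \<in> sets borel"
  by simp
lemma ball_sets_borel[measurable]: "ball (c::'a::euclidean_space) r \<in> sets borel"
  by simp

lemma inner_int:
  fixes c :: complex assumes r: "r > 0"
  shows "(\<integral>\<^sup>+ z. ennreal (indicator (ball c r) z / norm (z - c)) \<partial>lborel) \<le> ennreal (16 * r)"
proof -
  have pw: "ennreal (indicator (ball c r) z / norm (z - c))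
      \<le> (\<Sum>j. ennreal (2^(Suc j)/r) * indicator (cball c (r/2^j)) z)" for z
  proof (cases "z \<in> ball c r \<and> z \<noteq> c")
    case True
    then have u: "norm (z - c) > 0" "norm (z - c) < r" by (auto simp: dist_norm norm_minus_commute)
    then have "r / norm (z - c) \<ge> 1" by simp
    then obtain j :: nat where j: "2^j \<le> r / norm (z - c)" "r / norm (z - c) < 2^(Suc j)"
      using dyadic_exists by blast
    have "norm (z - c) \<le> r / 2^j" using j(1) u by (simp add: field_simps)
    then have zin: "z \<in> cball c (r/2^j)" by (simp add: dist_norm norm_minus_commute)
    have "1 / norm (z - c) < 2^(Suc j) / r" using j(2) u r by (simp add: field_simps)
    then have "ennreal (indicator (ball c r) z / norm (z - c)) \<le> ennreal (2^(Suc j)/r) * indicator (cball c (r/2^j)) z"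
      using True zin by (auto intro!: ennreal_leI)
    also have "\<dots> \<le> (\<Sum>j. ennreal (2^(Suc j)/r) * indicator (cball c (r/2^j)) z)"
      by (rule suminf_ge_term)
    finally show ?thesis .
  next
    case False
    then show ?thesis by (auto simp: indicator_def)
  qed
  have "(\<integral>\<^sup>+ z. ennreal (indicator (ball c r) z / norm (z - c)) \<partial>lborel)
      \<le> (\<integral>\<^sup>+ z. (\<Sum>j. ennreal (2^(Suc j)/r) * indicator (cball c (r/2^j)) z) \<partial>lborel)"
    by (intro nn_integral_mono pw)
  also have "\<dots> = (\<Sum>j. \<integral>\<^sup>+ z. ennreal (2^(Suc j)/r) * indicator (cball c (r/2^j)) z \<partial>lborel)"
    by (intro nn_integral_suminf) measurable
  also have "\<dots> = (\<Sum>j. ennreal (2^(Suc j)/r) * emeasure lborel (cball c (r/2^j)))"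
    by (subst nn_integral_cmult_indicator) auto
  also have "\<dots> \<le> (\<Sum>j. ennreal (8 * r / 2^j))"
  proof (intro suminf_le)
    fix j :: nat
    have "ennreal (2^(Suc j)/r) * emeasure lborel (cball c (r/2^j)) \<le> ennreal (2^(Suc j)/r) * ennreal (4 * (r/2^j)^2)"
      using r by (intro mult_left_mono cball_measure_le) auto
    also have "\<dots> = ennreal (8 * r / 2^j)"
      using r by (subst ennreal_mult'[symmetric]) (auto simp: power2_eq_square field_simps)
    finally show "ennreal (2^(Suc j)/r) * emeasure lborel (cball c (r/2^j)) \<le> ennreal (8 * r / 2^j)" .
  qed auto
  also have "\<dots> = ennreal (2 * (8 * r))" using r by (intro geom_sum_ennreal) simp
  also have "\<dots> = ennreal (16 * r)" by simp
  finally show ?thesis .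
qed

lemma outer_int:
  fixes c :: complex assumes r: "\<rho> > 0"
  shows "(\<integral>\<^sup>+ z. ennreal (indicator {z. \<rho> \<le> norm (z - c)} z / norm (z - c)^3) \<partial>lborel) \<le> ennreal (32 / \<rho>)"
proof -
  have pw: "ennreal (indicator {z. \<rho> \<le> norm (z - c)} z / norm (z - c)^3)
      \<le> (\<Sum>j. ennreal (1 / (\<rho> * 2^j)^3) * indicator (cball c (\<rho> * 2^(Suc j))) z)" for z
  proof (cases "\<rho> \<le> norm (z - c)")
    case True
    then have u: "norm (z - c) > 0" using r by linarith
    have "norm (z - c) / \<rho> \<ge> 1" using True r by simp
    then obtain j :: nat where j: "2^j \<le> norm (z - c) / \<rho>" "norm (z - c) / \<rho> < 2^(Suc j)"
      using dyadic_exists by blast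
    have "norm (z - c) \<le> \<rho> * 2^(Suc j)" using j(2) r by (simp add: field_simps)
    then have zin: "z \<in> cball c (\<rho> * 2^(Suc j))" by (simp add: dist_norm norm_minus_commute)
    have le1: "\<rho> * 2^j \<le> norm (z - c)" using j(1) r by (simp add: field_simps)
    have "(\<rho> * 2^j)^3 \<le> norm (z - c)^3" using le1 r by (intro power_mono) auto
    then have "1 / norm (z - c)^3 \<le> 1 / (\<rho> * 2^j)^3" using r u
      by (intro divide_left_mono) auto
    then have "ennreal (indicator {z. \<rho> \<le> norm (z - c)} z / norm (z - c)^3) \<le> ennreal (1 / (\<rho> * 2^j)^3) * indicator (cball c (\<rho> * 2^(Suc j))) z"
      using True zin by (auto intro!: ennreal_leI)
    also have "\<dots> \<le> (\<Sum>j. ennreal (1 / (\<rho> * 2^j)^3) * indicator (cball c (\<rho> * 2^(Suc j))) z)"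
      by (rule suminf_ge_term)
    finally show ?thesis .
  next
    case False
    then show ?thesis by (auto simp: indicator_def)
  qed
  have "(\<integral>\<^sup>+ z. ennreal (indicator {z. \<rho> \<le> norm (z - c)} z / norm (z - c)^3) \<partial>lborel)
      \<le> (\<integral>\<^sup>+ z. (\<Sum>j. ennreal (1 / (\<rho> * 2^j)^3) * indicator (cball c (\<rho> * 2^(Suc j))) z) \<partial>lborel)"
    by (intro nn_integral_mono pw)
  also have "\<dots> = (\<Sum>j. \<integral>\<^sup>+ z. ennreal (1 / (\<rho> * 2^j)^3) * indicator (cball c (\<rho> * 2^(Suc j))) z \<partial>lborel)"
    by (intro nn_integral_suminf) measurable
  also have "\<dots> = (\<Sum>j. ennreal (1 / (\<rho> * 2^j)^3) * emeasure lborel (cball c (\<rho> * 2^(Suc j))))"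
    by (subst nn_integral_cmult_indicator) auto
  also have "\<dots> \<le> (\<Sum>j. ennreal ((16 / \<rho>) / 2^j))"
  proof (intro suminf_le)
    fix j :: nat
    have "ennreal (1 / (\<rho> * 2^j)^3) * emeasure lborel (cball c (\<rho> * 2^(Suc j))) \<le> ennreal (1 / (\<rho> * 2^j)^3) * ennreal (4 * (\<rho> * 2^(Suc j))^2)"
      using r by (intro mult_left_mono cball_measure_le) auto
    also have "\<dots> = ennreal ((16 / \<rho>) / 2^j)"
      using r by (subst ennreal_mult'[symmetric]) (auto simp: power2_eq_square power3_eq_cube field_simps)
    finally show "ennreal (1 / (\<rho> * 2^j)^3) * emeasure lborel (cball c (\<rho> * 2^(Suc j))) \<le> ennreal ((16 / \<rho>) / 2^j)" .
  qed auto
  also have "\<dots> = ennreal (2 * (16 / \<rho>))" using r by (intro geom_sum_ennreal) simp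
  also have "\<dots> = ennreal (32 / \<rho>)" by simp
  finally show ?thesis .
qed

definition G :: "complex \<Rightarrow> real \<Rightarrow> complex" where
  "G z \<theta> = \<i> * Ln (1 - z * cis (-\<theta>)) / z"

lemma cis_minus_vd: "((\<lambda>\<theta>. cis (-\<theta>)) has_vector_derivative (- \<i> * cis (-t))) (at t within S)"
proof -
  have "((\<lambda>\<theta>. cis (-\<theta>)) has_derivative (\<lambda>x. (-x) *\<^sub>R (\<i> * cis (-t)))) (at t within S)"
    by (intro has_derivative_cis derivative_intros)
  moreover have "(\<lambda>x. (-x) *\<^sub>R (\<i> * cis (-t))) = (\<lambda>x. x *\<^sub>R (- \<i> * cis (-t)))"
    by (auto simp: fun_eq_iff)
  ultimately show ?thesis by (simp add: has_vector_derivative_def)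
qed

lemma Re_one_minus_pos:
  fixes z w :: complex assumes "norm z < 1" "norm w = 1"
  shows "Re (1 - z * w) > 0"
proof -
  have "Re (z * w) \<le> norm (z * w)" by (rule complex_Re_le_cmod)
  also have "\<dots> < 1" using assms by (simp add: norm_mult)
  finally show ?thesis by simp
qed

lemma G_deriv:
  fixes z :: complex assumes z: "norm z < 1" "z \<noteq> 0"
  shows "((G z) has_vector_derivative (1 / (z - cis t))) (at t within S)"
proof -
  define w where "w = 1 - z * cis (-t)"
  have wpos: "Re w > 0" unfolding w_def using Re_one_minus_pos[of z "cis (-t)"] z by simp
  then have wnz: "w \<notin> \<real>\<^sub>\<le>\<^sub>0" by (auto simp: complex_nonpos_Reals_iff)
  have d1: "((\<lambda>\<theta>. 1 - z * cis (-\<theta>)) has_vector_derivative (0 - (z * (- \<i> * cis (-t))))) (at t)"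
    by (intro has_vector_derivative_diff has_vector_derivative_const has_vector_derivative_mult_right cis_minus_vd)
  have d2: "(Ln has_field_derivative inverse w) (at ((\<lambda>\<theta>. 1 - z * cis (-\<theta>)) t))"
    using has_field_derivative_Ln[OF wnz] by (simp add: w_def)
  have d3: "((Ln \<circ> (\<lambda>\<theta>. 1 - z * cis (-\<theta>))) has_vector_derivative ((0 - (z * (- \<i> * cis (-t)))) * inverse w)) (at t)"
    by (rule field_vector_diff_chain_at[OF d1 d2])
  have d4: "((\<lambda>\<theta>. (\<i> / z) * (Ln \<circ> (\<lambda>\<theta>. 1 - z * cis (-\<theta>))) \<theta>) has_vector_derivative ((\<i> / z) * ((0 - (z * (- \<i> * cis (-t)))) * inverse w))) (at t)"
    by (rule has_vector_derivative_mult_right[OF d3])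
  have wnz0: "w \<noteq> 0" using wpos by auto
  have "cis t - z \<noteq> 0"
  proof
    assume "cis t - z = 0" then have "norm z = 1" by (metis eq_iff_diff_eq_0 norm_cis)
    then show False using z by simp
  qed
  then have eq: "(\<i> / z) * ((0 - (z * (- \<i> * cis (-t)))) * inverse w) = 1 / (z - cis t)"
    unfolding w_def using z
    by (simp add: field_simps cis_mult[symmetric] flip: cis_inverse)
  have "G z = (\<lambda>\<theta>. (\<i> / z) * (Ln \<circ> (\<lambda>\<theta>. 1 - z * cis (-\<theta>))) \<theta>)"
    by (auto simp: G_def fun_eq_iff)
  then have "((G z) has_vector_derivative (1 / (z - cis t))) (at t)" using d4 eq by simp
  then show ?thesis by (rule has_vector_derivative_at_within)
qed

lemma cos_lower: "1 - x^2/2 \<le> cos (x::real)"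
proof -
  have "cos x = cos (2 * (x/2))" by simp
  also have "\<dots> = 1 - 2 * sin (x/2) ^ 2" by (rule cos_double_sin)
  finally have c: "cos x = 1 - 2 * sin (x/2) ^ 2" .
  have "sin (x/2) ^ 2 \<le> (x/2)^2"
    using abs_sin_x_le_abs_x[of "x/2"] by (metis abs_ge_zero power2_abs power_mono)
  then show ?thesis using c by (simp add: power_divide)
qed

lemma sin_lower: assumes "(x::real) \<ge> 0" shows "x - sin x \<le> x^3/6"
proof -
  have "(\<lambda>t. t^3/6 - t + sin t) 0 \<le> (\<lambda>t. t^3/6 - t + sin t) x"
  proof (rule DERIV_nonneg_imp_nondecreasing[OF assms])
    fix t :: real
    show "\<exists>y. ((\<lambda>t. t^3/6 - t + sin t) has_real_derivative y) (at t) \<and> 0 \<le> y"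
      using cos_lower[of t]
      by (intro exI[of _ "t^2/2 - 1 + cos t"]) (auto intro!: derivative_eq_intros simp: power2_eq_square)
  qed
  then show ?thesis by simp
qed

lemma norm_cis_diff: "norm (cis a - cis b) \<le> \<bar>a - b\<bar>"
proof -
  have e: "cis a - cis b = cis b * (cis (a - b) - 1)"
    by (simp add: algebra_simps cis_mult)
  have "(norm (cis (a - b) - 1))^2 = (cos (a-b) - 1)^2 + (sin (a-b))^2"
    by (simp add: cmod_def)
  also have "\<dots> = 2 - 2 * cos (a - b)"
    using sin_cos_squared_add[of "a-b"] by (simp add: power2_eq_square algebra_simps)
  also have "\<dots> \<le> (a - b)^2" using cos_lower[of "a-b"] by simp
  finally have "(norm (cis (a - b) - 1))^2 \<le> \<bar>a - b\<bar>^2" by simp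
  then have "norm (cis (a - b) - 1) \<le> \<bar>a - b\<bar>"
    by (rule power2_le_imp_le) simp
  then show ?thesis using e by (simp add: norm_mult)
qed

lemma G_integral:
  fixes z :: complex assumes z: "norm z < 1" "z \<noteq> 0" and ab: "a \<le> b"
  shows "((\<lambda>\<theta>. 1 / (z - cis \<theta>)) has_integral (G z b - G z a)) {a..b}"
  by (rule fundamental_theorem_of_calculus[OF ab G_deriv[OF z]])

lemma G_periodic: "G z (2*pi) = G z 0"
proof -
  have "cis (-(2*pi)) = 1" by (simp add: complex_eq_iff)
  then show ?thesis by (simp add: G_def)
qed

lemma cis_vd: "(cis has_vector_derivative (\<i> * cis t)) (at t within S)"
proof -
  have "((\<lambda>\<theta>. cis \<theta>) has_derivative (\<lambda>x. x *\<^sub>R (\<i> * cis t))) (at t within S)"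
    by (intro has_derivative_cis derivative_intros)
  then show ?thesis by (simp add: has_vector_derivative_def)
qed

lemma dipole_integral:
  assumes h: "h \<ge> 0"
  shows "((\<lambda>\<theta>. cis \<theta> - cis m) has_integral (cis m * of_real (2 * sin h - 2 * h))) {m-h..m+h}"
proof -
  define F where "F = (\<lambda>\<theta>::real. - \<i> * cis \<theta> - of_real \<theta> * cis m)"
  have d: "(F has_vector_derivative (cis t - cis m)) (at t within {m-h..m+h})" for t
  proof -
    have ofr: "(complex_of_real has_vector_derivative 1) (at t within {m-h..m+h})"
      using has_vector_derivative_of_real[OF DERIV_ident] by simp
    have "(F has_vector_derivative (- \<i> * (\<i> * cis t) - 1 * cis m)) (at t within {m-h..m+h})"
      unfolding F_def
      by (intro has_vector_derivative_diff has_vector_derivative_mult_right has_vector_derivative_mult_left cis_vd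
           ofr)
    then show ?thesis by simp
  qed
  have "((\<lambda>\<theta>. cis \<theta> - cis m) has_integral (F (m+h) - F (m-h))) {m-h..m+h}"
    using h by (intro fundamental_theorem_of_calculus d) auto
  moreover have "F (m+h) - F (m-h) = cis m * of_real (2 * sin h - 2 * h)"
  proof -
    have c1: "cis h - cis (-h) = 2 * \<i> * of_real (sin h)" by (simp add: complex_eq_iff)
    have "F (m+h) - F (m-h) = - \<i> * (cis (m+h) - cis (m-h)) - of_real (2*h) * cis m"
      unfolding F_def by (simp add: algebra_simps)
    also have "cis (m+h) - cis (m-h) = cis m * (cis h - cis (-h))"
      by (simp add: cis_mult algebra_simps)
    also have "\<dots> = cis m * (2 * \<i> * of_real (sin h))" by (simp only: c1)
    finally show ?thesis by (simp add: algebra_simps)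
  qed
  ultimately show ?thesis by simp
qed



lemma u_nz:
  fixes z :: complex assumes "norm z < 1" shows "z - cis t \<noteq> 0"
proof
  assume "z - cis t = 0" then have "norm z = 1" by (metis eq_iff_diff_eq_0 norm_cis)
  then show False using assms by simp
qed

lemma u_le2:
  fixes z :: complex assumes "norm z < 1" shows "norm (z - cis t) \<le> 2"
  using norm_triangle_ineq4[of z "cis t"] assms by simp

lemma arc_near:
  fixes z :: complex and m h \<kappa> :: real
  assumes z: "norm z < 1" "z \<noteq> 0" and h: "0 < h" and k: "\<kappa> > 0"
  shows "norm (of_real (\<kappa>*(2*h)) / (z - cis m) - of_real \<kappa> * (G z (m+h) - G z (m-h)))
    \<le> \<kappa>*(2*h) / norm (z - cis m) + \<kappa> * integral {m-h..m+h} (\<lambda>\<theta>. 1 / norm (z - cis \<theta>))"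
proof -
  have I: "((\<lambda>\<theta>. 1 / (z - cis \<theta>)) has_integral (G z (m+h) - G z (m-h))) {m-h..m+h}"
    using h by (intro G_integral z) auto
  have cont: "continuous_on {m-h..m+h} (\<lambda>\<theta>. 1 / norm (z - cis \<theta>))"
    using u_nz[OF z(1)] by (intro continuous_intros) auto
  have nI: "norm (G z (m+h) - G z (m-h)) \<le> integral {m-h..m+h} (\<lambda>\<theta>. 1 / norm (z - cis \<theta>))"
  proof -
    have "norm (integral {m-h..m+h} (\<lambda>\<theta>. 1 / (z - cis \<theta>))) \<le> integral {m-h..m+h} (\<lambda>\<theta>. 1 / norm (z - cis \<theta>))"
      by (intro integral_norm_bound_integral has_integral_integrable[OF I] integrable_continuous_interval[OF cont])
        (auto simp: norm_divide)
    then show ?thesis using I by (simp add: integral_unique)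
  qed
  have "norm (of_real (\<kappa>*(2*h)) / (z - cis m) - of_real \<kappa> * (G z (m+h) - G z (m-h)))
      \<le> norm (of_real (\<kappa>*(2*h)) / (z - cis m)) + norm (of_real \<kappa> * (G z (m+h) - G z (m-h)))"
    by (rule norm_triangle_ineq4)
  also have "\<dots> = \<kappa>*(2*h) / norm (z - cis m) + \<kappa> * norm (G z (m+h) - G z (m-h))"
    using h k by (simp add: norm_divide norm_mult)
  also have "\<dots> \<le> \<kappa>*(2*h) / norm (z - cis m) + \<kappa> * integral {m-h..m+h} (\<lambda>\<theta>. 1 / norm (z - cis \<theta>))"
    using nI k by simp
  finally show ?thesis .
qed

lemma req_lemma:
  fixes u w :: complex assumes "u \<noteq> 0" "w \<noteq> 0"
  shows "1 / w - 1 / u - (u - w) / u^2 = (u - w)^2 / (u^2 * w)"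
  using assms by (simp add: field_simps power2_eq_square)

lemma arc_far:
  fixes z :: complex and m h \<kappa> :: real
  assumes z: "norm z < 1" "z \<noteq> 0" and h: "0 < h" and k: "\<kappa> > 0"
    and far: "4*h \<le> norm (z - cis m)"
  shows "norm (of_real (\<kappa>*(2*h)) / (z - cis m) - of_real \<kappa> * (G z (m+h) - G z (m-h)))
    \<le> 4 * \<kappa> * h^3 / norm (z - cis m)^3"
proof -
  define u where "u = z - cis m"
  define U where "U = norm u"
  have unz: "u \<noteq> 0" unfolding u_def by (rule u_nz[OF z(1)])
  have U0: "U > 0" using unz by (simp add: U_def)
  have U2: "U \<le> 2" unfolding U_def u_def by (rule u_le2[OF z(1)])
  have Uh: "4*h \<le> U" using far by (simp add: U_def u_def)
  define I where "I = G z (m+h) - G z (m-h)"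
  define D where "D = cis m * of_real (2 * sin h - 2 * h)"
  have hI: "((\<lambda>\<theta>. 1 / (z - cis \<theta>)) has_integral I) {m-h..m+h}"
    using h unfolding I_def by (intro G_integral z) auto
  have hD: "((\<lambda>\<theta>. cis \<theta> - cis m) has_integral D) {m-h..m+h}"
    unfolding D_def using h by (intro dipole_integral) auto
  have hC: "((\<lambda>\<theta>. 1 / u) has_integral (of_real (2*h) / u)) {m-h..m+h}"
    using has_integral_const_real[of "1/u" "m-h" "m+h"] h by (simp add: scaleR_conv_of_real)
  define r where "r = (\<lambda>\<theta>. 1 / (z - cis \<theta>) - 1 / u - (cis \<theta> - cis m) / u^2)"
  have hr: "(r has_integral (I - of_real (2*h) / u - D / u^2)) {m-h..m+h}"
    unfolding r_def by (intro has_integral_diff hI hC has_integral_divide hD)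
  have rb: "norm (r \<theta>) \<le> h^2 / (U^2 * (3/4 * U))" if th: "\<theta> \<in> cbox (m-h) (m+h)" for \<theta>
  proof -
    define d where "d = cis \<theta> - cis m"
    have "norm d \<le> \<bar>\<theta> - m\<bar>" unfolding d_def by (rule norm_cis_diff)
    also have "\<dots> \<le> h" using th by auto
    finally have dh: "norm d \<le> h" .
    have w: "z - cis \<theta> = u - d" unfolding u_def d_def by simp
    have "norm (u - d) \<ge> U - h" using norm_triangle_ineq2[of u d] dh unfolding U_def by linarith
    then have wl: "norm (z - cis \<theta>) \<ge> 3/4 * U" using w Uh by simp
    have wnz: "z - cis \<theta> \<noteq> 0" by (rule u_nz[OF z(1)])
    have req: "r \<theta> = d^2 / (u^2 * (z - cis \<theta>))"
      using req_lemma[OF unz wnz] unfolding r_def d_def u_def by simp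
    have "norm (r \<theta>) = (norm d)^2 / (U^2 * norm (z - cis \<theta>))"
      unfolding req U_def by (simp add: norm_divide norm_mult norm_power)
    also have "\<dots> \<le> h^2 / (U^2 * (3/4 * U))"
      using dh wl U0 by (intro frac_le mult_left_mono power_mono) auto
    finally show ?thesis .
  qed
  have nR: "norm (I - of_real (2*h) / u - D / u^2) \<le> h^2 / (U^2 * (3/4 * U)) * (2*h)"
    using has_integral_bound[of "h^2 / (U^2 * (3/4 * U))" r _ "m-h" "m+h"] hr rb U0 h
    by (auto simp: cbox_interval)
  have nD: "norm D \<le> h^3/3"
  proof -
    have "norm D = norm (complex_of_real (2 * sin h - 2 * h))" by (simp add: D_def norm_mult)
    also have "\<dots> = \<bar>2 * sin h - 2 * h\<bar>" by (rule norm_of_real)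
    also have "\<dots> = 2 * (h - sin h)" using abs_sin_x_le_abs_x[of h] h by auto
    also have "\<dots> \<le> h^3/3" using sin_lower[of h] h by simp
    finally show ?thesis .
  qed
  have eqE: "of_real (\<kappa>*(2*h)) / (z - cis m) - of_real \<kappa> * I
      = - of_real \<kappa> * ((I - of_real (2*h) / u - D / u^2) + D / u^2)"
    unfolding u_def by (simp add: algebra_simps)
  have "norm (of_real (\<kappa>*(2*h)) / (z - cis m) - of_real \<kappa> * I)
      \<le> \<kappa> * (norm (I - of_real (2*h) / u - D / u^2) + norm D / U^2)"
  proof -
    have tri: "norm ((I - of_real (2*h) / u - D / u^2) + D / u^2) \<le> norm (I - of_real (2*h) / u - D / u^2) + norm D / U^2"
      using norm_triangle_ineq[of "I - of_real (2*h) / u - D / u^2" "D / u^2"]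
      by (simp add: norm_divide norm_power U_def)
    have "norm (of_real (\<kappa>*(2*h)) / (z - cis m) - of_real \<kappa> * I) = \<kappa> * norm ((I - of_real (2*h) / u - D / u^2) + D / u^2)"
      unfolding eqE using k by (simp add: norm_mult)
    then show ?thesis using tri k by (simp add: mult_left_mono)
  qed
  also have "\<dots> \<le> \<kappa> * (h^2 / (U^2 * (3/4 * U)) * (2*h) + (h^3/3) / U^2)"
    using nR nD k U0 by (intro mult_left_mono add_mono divide_right_mono) auto
  also have "\<dots> \<le> 4 * \<kappa> * h^3 / U^3"
  proof -
    have "(h^3/3) / U^2 \<le> (h^3/3) * 2 / U^3"
      using U0 U2 h by (simp add: field_simps power2_eq_square power3_eq_cube)
    then have "h^2 / (U^2 * (3/4 * U)) * (2*h) + (h^3/3) / U^2 \<le> (8/3) * h^3 / U^3 + (2/3) * h^3 / U^3"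
      using U0 by (simp add: field_simps power2_eq_square power3_eq_cube)
    also have "\<dots> \<le> 4 * h^3 / U^3" using U0 h by (simp add: field_simps)
    finally have "h^2 / (U^2 * (3/4 * U)) * (2*h) + (h^3/3) / U^2 \<le> 4 * h^3 / U^3" .
    then have "\<kappa> * (h^2 / (U^2 * (3/4 * U)) * (2*h) + (h^3/3) / U^2) \<le> \<kappa> * (4 * h^3 / U^3)"
      using k by (intro mult_left_mono) auto
    moreover have "\<kappa> * (4 * h^3 / U^3) = 4 * \<kappa> * h^3 / U^3" by simp
    ultimately show ?thesis by linarith
  qed
  finally show ?thesis unfolding I_def U_def u_def .
qed

lemma cis_measurable[measurable]: "cis \<in> borel_measurable borel"
  by (intro borel_measurable_continuous_onI continuous_on_cis continuous_on_id)

definition Bd :: "real \<Rightarrow> real \<Rightarrow> real \<Rightarrow> complex \<Rightarrow> ennreal" where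
  "Bd \<kappa> m h z = ennreal (\<kappa>*(2*h) * (indicator (ball (cis m) (4*h)) z / norm (z - cis m)))
    + ennreal \<kappa> * indicator (ball (cis m) (4*h)) z *
        (\<integral>\<^sup>+\<theta>. ennreal (1 / norm (z - cis \<theta>)) * indicator {m-h..m+h} \<theta> \<partial>lborel)
    + ennreal (4*\<kappa>*h^3 * (indicator {z. 4*h \<le> norm (z - cis m)} z / norm (z - cis m)^3))"

lemma arc_bound:
  fixes z :: complex and m h \<kappa> :: real
  assumes z: "norm z < 1" "z \<noteq> 0" and h: "0 < h" and k: "\<kappa> > 0"
  shows "ennreal (norm (of_real (\<kappa>*(2*h)) / (z - cis m) - of_real \<kappa> * (G z (m+h) - G z (m-h)))) \<le> Bd \<kappa> m h z"
proof (cases "norm (z - cis m) < 4*h")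
  case True
  have cont: "continuous_on {m-h..m+h} (\<lambda>\<theta>. 1 / norm (z - cis \<theta>))"
    using u_nz[OF z(1)] by (intro continuous_intros) auto
  have hi: "((\<lambda>\<theta>. 1 / norm (z - cis \<theta>)) has_integral integral {m-h..m+h} (\<lambda>\<theta>. 1 / norm (z - cis \<theta>))) {m-h..m+h}"
    using integrable_continuous_interval[OF cont] by (simp add: integrable_integral)
  have nn: "(\<integral>\<^sup>+\<theta>. ennreal (1 / norm (z - cis \<theta>)) * indicator {m-h..m+h} \<theta> \<partial>lborel)
      = ennreal (integral {m-h..m+h} (\<lambda>\<theta>. 1 / norm (z - cis \<theta>)))"
    by (rule nn_integral_has_integral_lebesgue'[OF _ hi]) simp
  have ip: "integral {m-h..m+h} (\<lambda>\<theta>. 1 / norm (z - cis \<theta>)) \<ge> 0"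
    by (rule integral_nonneg[OF integrable_continuous_interval[OF cont]]) simp
  have inb: "indicator (ball (cis m) (4*h)) z = (1::real)" using True by (simp add: dist_norm norm_minus_commute)
  have "ennreal (norm (of_real (\<kappa>*(2*h)) / (z - cis m) - of_real \<kappa> * (G z (m+h) - G z (m-h))))
     \<le> ennreal (\<kappa>*(2*h) / norm (z - cis m) + \<kappa> * integral {m-h..m+h} (\<lambda>\<theta>. 1 / norm (z - cis \<theta>)))"
    by (intro ennreal_leI arc_near z h k)
  also have "\<dots> = ennreal (\<kappa>*(2*h) / norm (z - cis m)) + ennreal \<kappa> * ennreal (integral {m-h..m+h} (\<lambda>\<theta>. 1 / norm (z - cis \<theta>)))"
    using h k ip by (simp add: ennreal_plus[symmetric] ennreal_mult[symmetric] del: ennreal_plus)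
  also have "\<dots> \<le> Bd \<kappa> m h z"
  proof -
    have inb': "indicator (ball (cis m) (4*h)) z = (1::ennreal)" using True by (simp add: dist_norm norm_minus_commute)
    show ?thesis unfolding Bd_def nn inb inb' by simp
  qed
  finally show ?thesis .
next
  case False
  then have far: "4*h \<le> norm (z - cis m)" by simp
  have "ennreal (norm (of_real (\<kappa>*(2*h)) / (z - cis m) - of_real \<kappa> * (G z (m+h) - G z (m-h))))
     \<le> ennreal (4 * \<kappa> * h^3 / norm (z - cis m)^3)"
    by (intro ennreal_leI arc_far z h k far)
  also have "\<dots> \<le> Bd \<kappa> m h z"
    unfolding Bd_def using far by (simp add: indicator_def)
  finally show ?thesis .
qed

lemma T1_int:
  assumes h: "h > 0" and k: "\<kappa> > 0"
  shows "(\<integral>\<^sup>+z. ennreal (\<kappa>*(2*h) * (indicator (ball (cis m) (4*h)) z / norm (z - cis m))) \<partial>lborel) \<le> ennreal (128 * \<kappa> * h^2)"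
proof -
  have "(\<integral>\<^sup>+z. ennreal (\<kappa>*(2*h) * (indicator (ball (cis m) (4*h)) z / norm (z - cis m))) \<partial>lborel)
     = (\<integral>\<^sup>+z. ennreal (\<kappa>*(2*h)) * ennreal (indicator (ball (cis m) (4*h)) z / norm (z - cis m)) \<partial>lborel)"
    using h k by (intro nn_integral_cong ennreal_mult) auto
  also have "\<dots> = ennreal (\<kappa>*(2*h)) * (\<integral>\<^sup>+z. ennreal (indicator (ball (cis m) (4*h)) z / norm (z - cis m)) \<partial>lborel)"
    by (rule nn_integral_cmult) measurable
  also have "\<dots> \<le> ennreal (\<kappa>*(2*h)) * ennreal (16 * (4*h))"
    using h by (intro mult_left_mono inner_int) auto
  also have "\<dots> = ennreal (128 * \<kappa> * h^2)"
    using h k by (simp add: ennreal_mult[symmetric] power2_eq_square)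
  finally show ?thesis .
qed

lemma T3_int:
  assumes h: "h > 0" and k: "\<kappa> > 0"
  shows "(\<integral>\<^sup>+z. ennreal (4*\<kappa>*h^3 * (indicator {z. 4*h \<le> norm (z - cis m)} z / norm (z - cis m)^3)) \<partial>lborel) \<le> ennreal (32 * \<kappa> * h^2)"
proof -
  have "(\<integral>\<^sup>+z. ennreal (4*\<kappa>*h^3 * (indicator {z. 4*h \<le> norm (z - cis m)} z / norm (z - cis m)^3)) \<partial>lborel)
     = (\<integral>\<^sup>+z. ennreal (4*\<kappa>*h^3) * ennreal (indicator {z. 4*h \<le> norm (z - cis m)} z / norm (z - cis m)^3) \<partial>lborel)"
    using h k by (intro nn_integral_cong ennreal_mult) auto
  also have "\<dots> = ennreal (4*\<kappa>*h^3) * (\<integral>\<^sup>+z. ennreal (indicator {z. 4*h \<le> norm (z - cis m)} z / norm (z - cis m)^3) \<partial>lborel)"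
    by (rule nn_integral_cmult) measurable
  also have "\<dots> \<le> ennreal (4*\<kappa>*h^3) * ennreal (32 / (4*h))"
    using h by (intro mult_left_mono outer_int) auto
  also have "\<dots> = ennreal (32 * \<kappa> * h^2)"
    using h k by (simp add: ennreal_mult[symmetric] power2_eq_square power3_eq_cube)
  finally show ?thesis .
qed

lemma T2_int:
  assumes h: "h > 0" and k: "\<kappa> > 0"
  shows "(\<integral>\<^sup>+z. ennreal \<kappa> * indicator (ball (cis m) (4*h)) z *
        (\<integral>\<^sup>+\<theta>. ennreal (1 / norm (z - cis \<theta>)) * indicator {m-h..m+h} \<theta> \<partial>lborel) \<partial>lborel)
     \<le> ennreal (160 * \<kappa> * h^2)"
proof -
  define F where "F = (\<lambda>(z::complex) (\<theta>::real). indicator (ball (cis m) (4*h)) z * (ennreal (1 / norm (z - cis \<theta>)) * indicator {m-h..m+h} \<theta>) :: ennreal)"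
  have Fm: "case_prod F \<in> borel_measurable (lborel \<Otimes>\<^sub>M lborel)"
    unfolding F_def by measurable
  have ps: "pair_sigma_finite (lborel :: complex measure) (lborel :: real measure)"
    by (simp add: pair_sigma_finite_def lborel.sigma_finite_measure_axioms)
  have "(\<integral>\<^sup>+z. (\<integral>\<^sup>+\<theta>. F z \<theta> \<partial>lborel) \<partial>lborel) = (\<integral>\<^sup>+\<theta>. (\<integral>\<^sup>+z. F z \<theta> \<partial>lborel) \<partial>lborel)"
    by (rule pair_sigma_finite.Fubini'[OF ps Fm, symmetric])
  also have "\<dots> \<le> (\<integral>\<^sup>+\<theta>. ennreal (80 * h) * indicator {m-h..m+h} \<theta> \<partial>lborel)"
  proof (intro nn_integral_mono)
    fix \<theta> :: real
    show "(\<integral>\<^sup>+z. F z \<theta> \<partial>lborel) \<le> ennreal (80 * h) * indicator {m-h..m+h} \<theta>"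
    proof (cases "\<theta> \<in> {m-h..m+h}")
      case False
      then show ?thesis by (simp add: F_def)
    next
      case True
      have d: "norm (cis m - cis \<theta>) \<le> h"
        using norm_cis_diff[of m \<theta>] True by auto
      have "(\<integral>\<^sup>+z. F z \<theta> \<partial>lborel) \<le> (\<integral>\<^sup>+z. ennreal (indicator (ball (cis \<theta>) (5*h)) z / norm (z - cis \<theta>)) \<partial>lborel)"
      proof (intro nn_integral_mono)
        fix z :: complex
        show "F z \<theta> \<le> ennreal (indicator (ball (cis \<theta>) (5*h)) z / norm (z - cis \<theta>))"
        proof (cases "z \<in> ball (cis m) (4*h)")
          case False then show ?thesis by (simp add: F_def)
        next
          case zin: True
          have "norm (z - cis \<theta>) \<le> norm (z - cis m) + norm (cis m - cis \<theta>)"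
            using norm_triangle_ineq[of "z - cis m" "cis m - cis \<theta>"] by simp
          also have "\<dots> < 5*h" using zin d by (simp add: dist_norm norm_minus_commute)
          finally have "z \<in> ball (cis \<theta>) (5*h)" by (simp add: dist_norm norm_minus_commute)
          then show ?thesis using zin True by (simp add: F_def)
        qed
      qed
      also have "\<dots> \<le> ennreal (16 * (5*h))" using h by (intro inner_int) auto
      finally show ?thesis using True by simp
    qed
  qed
  also have "\<dots> = ennreal (80 * h) * emeasure lborel {m-h..m+h}"
    by (rule nn_integral_cmult_indicator) simp
  also have "\<dots> = ennreal (160 * h^2)"
    using h by (simp add: ennreal_mult[symmetric] power2_eq_square)
  finally have inner: "(\<integral>\<^sup>+z. (\<integral>\<^sup>+\<theta>. F z \<theta> \<partial>lborel) \<partial>lborel) \<le> ennreal (160 * h^2)" .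
  have "(\<integral>\<^sup>+z. ennreal \<kappa> * indicator (ball (cis m) (4*h)) z *
        (\<integral>\<^sup>+\<theta>. ennreal (1 / norm (z - cis \<theta>)) * indicator {m-h..m+h} \<theta> \<partial>lborel) \<partial>lborel)
      = (\<integral>\<^sup>+z. ennreal \<kappa> * (\<integral>\<^sup>+\<theta>. F z \<theta> \<partial>lborel) \<partial>lborel)"
  proof (intro nn_integral_cong)
    fix z :: complex
    have "indicator (ball (cis m) (4*h)) z * (\<integral>\<^sup>+\<theta>. ennreal (1 / norm (z - cis \<theta>)) * indicator {m-h..m+h} \<theta> \<partial>lborel)
        = (\<integral>\<^sup>+\<theta>. F z \<theta> \<partial>lborel)"
      unfolding F_def by (rule nn_integral_cmult[symmetric]) measurable
    then show "ennreal \<kappa> * indicator (ball (cis m) (4*h)) z *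
        (\<integral>\<^sup>+\<theta>. ennreal (1 / norm (z - cis \<theta>)) * indicator {m-h..m+h} \<theta> \<partial>lborel)
      = ennreal \<kappa> * (\<integral>\<^sup>+\<theta>. F z \<theta> \<partial>lborel)"
      by (simp add: mult.assoc)
  qed
  also have "\<dots> = ennreal \<kappa> * (\<integral>\<^sup>+z. (\<integral>\<^sup>+\<theta>. F z \<theta> \<partial>lborel) \<partial>lborel)"
    by (rule nn_integral_cmult) (use Fm in measurable)
  also have "\<dots> \<le> ennreal \<kappa> * ennreal (160 * h^2)"
    by (rule mult_left_mono[OF inner]) simp
  also have "\<dots> = ennreal (160 * \<kappa> * h^2)"
    using k by (simp add: ennreal_mult[symmetric] mult.assoc mult.left_commute)
  finally show ?thesis .
qed

lemma Bd_measurable[measurable]: "Bd \<kappa> m h \<in> borel_measurable lborel"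
  unfolding Bd_def by measurable

lemma arc_int:
  assumes h: "h > 0" and k: "\<kappa> > 0"
  shows "(\<integral>\<^sup>+z. Bd \<kappa> m h z \<partial>lborel) \<le> ennreal (320 * \<kappa> * h^2)"
proof -
  have "(\<integral>\<^sup>+z. Bd \<kappa> m h z \<partial>lborel) =
     (\<integral>\<^sup>+z. ennreal (\<kappa>*(2*h) * (indicator (ball (cis m) (4*h)) z / norm (z - cis m))) \<partial>lborel)
   + (\<integral>\<^sup>+z. ennreal \<kappa> * indicator (ball (cis m) (4*h)) z *
        (\<integral>\<^sup>+\<theta>. ennreal (1 / norm (z - cis \<theta>)) * indicator {m-h..m+h} \<theta> \<partial>lborel) \<partial>lborel)
   + (\<integral>\<^sup>+z. ennreal (4*\<kappa>*h^3 * (indicator {z. 4*h \<le> norm (z - cis m)} z / norm (z - cis m)^3)) \<partial>lborel)"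
  proof -
    have m1: "(\<lambda>z. ennreal (\<kappa>*(2*h) * (indicator (ball (cis m) (4*h)) z / norm (z - cis m)))) \<in> borel_measurable lborel"
      by measurable
    have m2: "(\<lambda>z. ennreal \<kappa> * indicator (ball (cis m) (4*h)) z *
        (\<integral>\<^sup>+\<theta>. ennreal (1 / norm (z - cis \<theta>)) * indicator {m-h..m+h} \<theta> \<partial>lborel)) \<in> borel_measurable lborel"
      by measurable
    have m3: "(\<lambda>z. ennreal (4*\<kappa>*h^3 * (indicator {z. 4*h \<le> norm (z - cis m)} z / norm (z - cis m)^3))) \<in> borel_measurable lborel"
      by measurable
    show ?thesis
      unfolding Bd_def[abs_def]
      by (simp only: nn_integral_add[OF borel_measurable_add[OF m1 m2] m3] nn_integral_add[OF m1 m2])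
  qed
  also have "\<dots> \<le> ennreal (128 * \<kappa> * h^2) + ennreal (160 * \<kappa> * h^2) + ennreal (32 * \<kappa> * h^2)"
    by (intro add_mono T1_int T2_int T3_int h k)
  also have "\<dots> = ennreal (320 * \<kappa> * h^2)"
    using h k by (simp add: ennreal_plus[symmetric] del: ennreal_plus)
  finally show ?thesis .
qed



lemma telescope: fixes n :: nat shows "(\<Sum>k=1..n. (f k - f (k-1)) :: complex) = f n - f 0"
  by (induction n) (auto simp: sum.cl_ivl_Suc)

lemma main_lemma:
  fixes n :: nat and \<alpha> :: "nat \<Rightarrow> real"
  assumes pos: "\<forall>k\<in>{1..n}. \<alpha> k > 0"
  shows "\<exists>zs::nat \<Rightarrow> complex. (\<forall>k\<in>{1..n}. norm (zs k) = 1) \<and>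
         (\<integral>\<^sup>+ z \<in> ball 0 1. ennreal (norm (\<Sum>k=1..n. complex_of_real (\<alpha> k) / (z - zs k))) \<partial>lborel)
           \<le> ennreal (160 * pi * (\<Sum>k=1..n. (\<alpha> k)\<^sup>2) / (\<Sum>k=1..n. \<alpha> k))"
proof (cases "n = 0")
  case True
  then show ?thesis by (intro exI[of _ "\<lambda>_. 1"]) simp
next
  case False
  define A where "A = (\<Sum>k=1..n. \<alpha> k)"
  have A: "A > 0" unfolding A_def using pos False by (intro sum_pos) auto
  define s where "s = (\<lambda>k. \<Sum>j=1..k. \<alpha> j)"
  define t where "t = (\<lambda>k. 2 * pi * s k / A)"
  define h where "h = (\<lambda>k. pi * \<alpha> k / A)"
  define m where "m = (\<lambda>k. t (k-1) + h k)"
  define \<kappa> where "\<kappa> = A / (2 * pi)"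
  define zs where "zs = (\<lambda>k. cis (m k))"
  have kpos: "\<kappa> > 0" using A by (simp add: \<kappa>_def)
  have hpos: "h k > 0" if "k \<in> {1..n}" for k using pos that A by (simp add: h_def)
  have tk: "m k + h k = t k" if "k \<in> {1..n}" for k
  proof -
    have "s k = s (k-1) + \<alpha> k" using that unfolding s_def
      by (cases k) (auto simp: sum.cl_ivl_Suc)
    then show ?thesis unfolding m_def t_def h_def using A by (simp add: field_simps)
  qed
  have tk1: "m k - h k = t (k-1)" for k unfolding m_def by simp
  have ka: "\<kappa> * (2 * h k) = \<alpha> k" for k unfolding \<kappa>_def h_def using A by (simp add: field_simps)
  have tn: "t n = 2 * pi" unfolding t_def s_def A_def[symmetric] using A by simp
  have t0: "t 0 = 0" unfolding t_def s_def by simp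
  define E where "E = (\<lambda>z k. of_real (\<kappa>*(2*h k)) / (z - cis (m k)) - of_real \<kappa> * (G z (m k + h k) - G z (m k - h k)))"
  have pw: "ennreal (norm (\<Sum>k=1..n. complex_of_real (\<alpha> k) / (z - zs k))) * indicator (ball 0 1) z
      \<le> (\<Sum>k=1..n. Bd \<kappa> (m k) (h k) z)" if z0: "z \<noteq> 0" for z
  proof (cases "z \<in> ball 0 1")
    case False then show ?thesis by simp
  next
    case True
    then have z1: "norm z < 1" by simp
    have "(\<Sum>k=1..n. complex_of_real (\<alpha> k) / (z - zs k))
        = (\<Sum>k=1..n. E z k + of_real \<kappa> * (G z (t k) - G z (t (k-1))))"
    proof (intro sum.cong refl)
      fix k assume k: "k \<in> {1..n}"
      show "complex_of_real (\<alpha> k) / (z - zs k) = E z k + of_real \<kappa> * (G z (t k) - G z (t (k-1)))"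
        unfolding E_def zs_def ka tk[OF k] tk1 by (simp add: algebra_simps)
    qed
    also have "\<dots> = (\<Sum>k=1..n. E z k) + of_real \<kappa> * (\<Sum>k=1..n. G z (t k) - G z (t (k-1)))"
      by (simp add: sum.distrib sum_distrib_left)
    also have "(\<Sum>k=1..n. G z (t k) - G z (t (k-1))) = 0"
      using telescope[of "\<lambda>k. G z (t k)" n] tn t0 G_periodic[of z] by simp
    finally have eq: "(\<Sum>k=1..n. complex_of_real (\<alpha> k) / (z - zs k)) = (\<Sum>k=1..n. E z k)" by simp
    have "ennreal (norm (\<Sum>k=1..n. complex_of_real (\<alpha> k) / (z - zs k))) \<le> ennreal (\<Sum>k=1..n. norm (E z k))"
      unfolding eq by (intro ennreal_leI norm_sum)
    also have "\<dots> = (\<Sum>k=1..n. ennreal (norm (E z k)))" by (rule sum_ennreal[symmetric]) simp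
    also have "\<dots> \<le> (\<Sum>k=1..n. Bd \<kappa> (m k) (h k) z)"
    proof (intro sum_mono)
      fix k assume k: "k \<in> {1..n}"
      show "ennreal (norm (E z k)) \<le> Bd \<kappa> (m k) (h k) z"
        unfolding E_def by (rule arc_bound[OF z1 z0 hpos[OF k] kpos])
    qed
    finally show ?thesis using True by simp
  qed
  have "(\<integral>\<^sup>+ z \<in> ball 0 1. ennreal (norm (\<Sum>k=1..n. complex_of_real (\<alpha> k) / (z - zs k))) \<partial>lborel)
      \<le> (\<integral>\<^sup>+ z. (\<Sum>k=1..n. Bd \<kappa> (m k) (h k) z) \<partial>lborel)"
    by (intro nn_integral_mono_AE) (use AE_lborel_singleton[of 0] pw in \<open>auto elim!: AE_mp\<close>)
  also have "\<dots> = (\<Sum>k=1..n. \<integral>\<^sup>+ z. Bd \<kappa> (m k) (h k) z \<partial>lborel)"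
    by (rule nn_integral_sum) measurable
  also have "\<dots> \<le> (\<Sum>k=1..n. ennreal (320 * \<kappa> * (h k)^2))"
    by (intro sum_mono arc_int hpos kpos)
  also have "\<dots> = ennreal (\<Sum>k=1..n. 320 * \<kappa> * (h k)^2)"
    using kpos by (intro sum_ennreal) simp
  also have "(\<Sum>k=1..n. 320 * \<kappa> * (h k)^2) = 160 * pi * (\<Sum>k=1..n. (\<alpha> k)\<^sup>2) / (\<Sum>k=1..n. \<alpha> k)"
    unfolding A_def[symmetric] \<kappa>_def h_def using A
    by (simp add: sum_distrib_left sum_divide_distrib power2_eq_square field_simps)
  finally have fin: "(\<integral>\<^sup>+ z \<in> ball 0 1. ennreal (norm (\<Sum>k=1..n. complex_of_real (\<alpha> k) / (z - zs k))) \<partial>lborel)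
    \<le> ennreal (160 * pi * (\<Sum>k=1..n. (\<alpha> k)\<^sup>2) / (\<Sum>k=1..n. \<alpha> k))" .
  show ?thesis by (rule exI[of _ zs]) (use fin in \<open>simp add: zs_def\<close>)
qed

theorem theorem1p3:
  shows "\<exists>C::real. C > 0 \<and>
    (\<forall>(n::nat) (\<alpha>::nat \<Rightarrow> real). (\<forall>k\<in>{1..n}. \<alpha> k > 0) \<longrightarrow>
      (\<exists>zs::nat \<Rightarrow> complex. (\<forall>k\<in>{1..n}. norm (zs k) = 1) \<and>
         (\<integral>\<^sup>+ z \<in> ball 0 1. ennreal (norm (\<Sum>k=1..n. complex_of_real (\<alpha> k) / (z - zs k))) \<partial>lborel)
           \<le> ennreal (C * (\<Sum>k=1..n. (\<alpha> k)\<^sup>2) / (\<Sum>k=1..n. \<alpha> k))))"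
  by (intro exI[of _ "160 * pi"] conjI allI impI main_lemma) auto

end
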